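(* The set of $S$-gap shifts with entropy $\log(\frac{1+\sqrt5}{2})$ is countably infinite. Moreover, infinitely many of these $S$-gap shifts have the specification property.
   Context: For a nonempty set $S\subseteq\{0,1,2,\dots\}$, the $S$-gap shift $X(S)\subseteq\{0,1\}^{\mathbb{Z}}$ is the set of bi-infinite binary sequences in which the number of consecutive zeros between ones is always an element of $S$. The entropy of a shift $X$ is $h(X)=\lim_n\frac1n\log|\mathcal{B}_n(X)|$, where $\mathcal{B}_n(X)$ is the set of words of length $n$ occurring in points of $X$ and $\log$ is to base $2$. $X$ has the specification property if there is $N\ge1$ such that for all $u,v\in\mathcal{B}(X)=\bigcup_n\mathcal{B}_n(X)$ there exists $w\in\mathcal{B}_N(X)$ with $uwv\in\mathcal{B}(X)$. *)

theory Defs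
  imports Complex_Main "HOL-Library.Countable_Set"
begin

text \<open>Bi-infinite binary sequences are functions int \<Rightarrow> bool (True = symbol 1, False = 0).
Words are lists of bool.\<close>

text \<open>The S-gap shift X(S) (standard closed version): between any two consecutive ones the
number of zeros lies in S, and every block of k consecutive zeros is bounded by some
element of S (this only restricts finite S; it is exactly the closure of the set of
points with all gaps in S).\<close>
definition gap_shift :: "nat set \<Rightarrow> (int \<Rightarrow> bool) set" where
  "gap_shift S = {x.
     (\<forall>i j. i < j \<and> x i \<and> x j \<and> (\<forall>k. i < k \<and> k < j \<longrightarrow> \<not> x k)
            \<longrightarrow> nat (j - i - 1) \<in> S) \<and>
     (\<forall>i (k::nat). (\<forall>m<k. \<not> x (i + int m)) \<longrightarrow> (\<exists>s\<in>S. k \<le> s))}"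

definition blocks :: "(int \<Rightarrow> bool) set \<Rightarrow> nat \<Rightarrow> bool list set" where
  "blocks X n = {w. length w = n \<and> (\<exists>x\<in>X. \<exists>i. \<forall>m<n. w ! m = x (i + int m))}"

definition language :: "(int \<Rightarrow> bool) set \<Rightarrow> bool list set" where
  "language X = (\<Union>n. blocks X n)"

definition has_entropy :: "(int \<Rightarrow> bool) set \<Rightarrow> real \<Rightarrow> bool" where
  "has_entropy X h \<longleftrightarrow> ((\<lambda>n. log 2 (real (card (blocks X n))) / real n) \<longlonglongrightarrow> h)"

definition has_specification :: "(int \<Rightarrow> bool) set \<Rightarrow> bool" where
  "has_specification X \<longleftrightarrow> (\<exists>N\<ge>1. \<forall>u\<in>language X. \<forall>v\<in>language X.
      \<exists>w\<in>blocks X N. u @ w @ v \<in> language X)"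

end

theory Submission
  imports Defs "HOL-Real_Asymp.Real_Asymp"
begin


definition gapok :: "nat set \<Rightarrow> bool list \<Rightarrow> bool" where
  "gapok S w \<longleftrightarrow> (\<forall>i j. i < j \<longrightarrow> j < length w \<longrightarrow> w!i \<longrightarrow> w!j \<longrightarrow>
      (\<forall>k. i < k \<longrightarrow> k < j \<longrightarrow> \<not> w!k) \<longrightarrow> j - i - 1 \<in> S)"

lemma gapok_glue:
  assumes A: "gapok S (u @ [True])" and B: "gapok S (True # v)"
  shows "gapok S (u @ True # v)"
  unfolding gapok_def
proof (intro allI impI)
  fix i j
  assume ij: "i < j" and jl: "j < length (u @ True # v)" and wi: "(u @ True # v) ! i"
    and wj: "(u @ True # v) ! j" and btw: "\<forall>k. i < k \<longrightarrow> k < j \<longrightarrow> \<not> (u @ True # v) ! k"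
  let ?n = "length u"
  have e1: "(u @ True # v) ! k = (u @ [True]) ! k" if "k \<le> ?n" for k
    using that by (cases "k < ?n") (auto simp: nth_append)
  have e2: "(u @ True # v) ! k = (True # v) ! (k - ?n)" if "k \<ge> ?n" for k
    using that by (auto simp: nth_append)
  show "j - i - 1 \<in> S"
  proof (cases "j \<le> ?n")
    case True
    then show ?thesis using A ij wi wj btw e1 unfolding gapok_def
      by (metis (no_types, lifting) le_trans less_imp_le_nat length_append_singleton less_Suc_eq_le)
  next
    case False
    show ?thesis
    proof (cases "i \<ge> ?n")
      case True
      have "j - ?n - (i - ?n) - 1 \<in> S"
        using B unfolding gapok_def
      proof (elim allE impE)
        show "i - ?n < j - ?n" using ij True by simp
        show "j - ?n < length (True # v)" using jl False by simp
        show "(True # v) ! (i - ?n)" using wi e2 True by simp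
        show "(True # v) ! (j - ?n)" using wj e2 True ij by simp
        show "\<forall>k>i - ?n. k < j - ?n \<longrightarrow> \<not> (True # v) ! k"
        proof (intro allI impI)
          fix k assume "i - ?n < k" "k < j - ?n"
          then have "\<not> (u @ True # v) ! (k + ?n)" using btw True by auto
          then show "\<not> (True # v) ! k" using e2[of "k + ?n"] by simp
        qed
      qed
      then show ?thesis using True ij by simp
    next
      case False2: False
      have "(u @ True # v) ! ?n" by simp
      moreover have "i < ?n" "?n < j" using False False2 by auto
      ultimately show ?thesis using btw by blast
    qed
  qed
qed

lemma gapok_prefix: "gapok S (u @ v) \<Longrightarrow> gapok S u"
  unfolding gapok_def
proof (intro allI impI)
  fix i j
  assume H: "\<forall>i j. i < j \<longrightarrow> j < length (u @ v) \<longrightarrow> (u @ v) ! i \<longrightarrow> (u @ v) ! j \<longrightarrow>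
      (\<forall>k. i < k \<longrightarrow> k < j \<longrightarrow> \<not> (u @ v) ! k) \<longrightarrow> j - i - 1 \<in> S"
    and a: "i < j" "j < length u" "u ! i" "u ! j" and b: "\<forall>k. i < k \<longrightarrow> k < j \<longrightarrow> \<not> u ! k"
  have c: "\<forall>k. i < k \<longrightarrow> k < j \<longrightarrow> \<not> (u @ v) ! k" using b a by (auto simp: nth_append)
  show "j - i - 1 \<in> S" using H[rule_format, of i j] a c by (auto simp: nth_append)
qed

lemma gapok_suffix: "gapok S (u @ v) \<Longrightarrow> gapok S v"
  unfolding gapok_def
proof (intro allI impI)
  fix i j
  assume H: "\<forall>i j. i < j \<longrightarrow> j < length (u @ v) \<longrightarrow> (u @ v) ! i \<longrightarrow> (u @ v) ! j \<longrightarrow>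
      (\<forall>k. i < k \<longrightarrow> k < j \<longrightarrow> \<not> (u @ v) ! k) \<longrightarrow> j - i - 1 \<in> S"
    and a: "i < j" "j < length v" "v ! i" "v ! j" and b: "\<forall>k. i < k \<longrightarrow> k < j \<longrightarrow> \<not> v ! k"
  have c: "\<forall>k. i + length u < k \<longrightarrow> k < j + length u \<longrightarrow> \<not> (u @ v) ! k"
  proof (intro allI impI)
    fix k assume "i + length u < k" "k < j + length u"
    then show "\<not> (u @ v) ! k" using b[rule_format, of "k - length u"] by (auto simp: nth_append)
  qed
  have "(j + length u) - (i + length u) - 1 \<in> S"
    using H[rule_format, of "i + length u" "j + length u"] a c by (auto simp: nth_append)
  then show "j - i - 1 \<in> S" by simp
qed

lemma gapok_infix: "gapok S (x @ y @ z) \<Longrightarrow> gapok S y"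
  using gapok_prefix gapok_suffix by blast

lemma gapok_atmost1:
  assumes "\<And>i j. i < j \<Longrightarrow> j < length w \<Longrightarrow> w!i \<Longrightarrow> w!j \<Longrightarrow> False"
  shows "gapok S w"
  using assms unfolding gapok_def by blast

lemma gapok_rep: "gapok S (replicate k False)"
  by (rule gapok_atmost1) simp

lemma gapok_True_rep: "gapok S (True # replicate k False)"
  by (rule gapok_atmost1) (auto simp: nth_Cons')

lemma gapok_basic:
  assumes "s \<in> S" shows "gapok S (True # replicate s False @ [True])"
  unfolding gapok_def
proof (intro allI impI)
  fix i j
  let ?w = "True # replicate s False @ [True]"
  assume a: "i < j" "j < length ?w" "?w ! i" "?w ! j"
  have t: "?w ! k \<longleftrightarrow> k = 0 \<or> k = s + 1" if "k < length ?w" for k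
    using that by (auto simp: nth_Cons' nth_append)
  have "i = 0" "j = s + 1" using a t[of i] t[of j] by auto
  then show "j - i - 1 \<in> S" using assms by simp
qed

lemma gapok_basic_rev:
  assumes "gapok S (True # replicate s False @ True # w)" shows "s \<in> S"
proof -
  let ?w = "True # replicate s False @ True # w"
  have c: "\<forall>k. 0 < k \<longrightarrow> k < s + 1 \<longrightarrow> \<not> ?w ! k" by (auto simp: nth_Cons' nth_append)
  have "s + 1 - 0 - 1 \<in> S"
    using assms unfolding gapok_def
    using spec[OF spec[OF assms[unfolded gapok_def]], of 0 "s+1"] c by (auto simp: nth_append)
  then show ?thesis by simp
qed

lemma gapok_ones:
  assumes "0 \<in> S" "gapok S (True # R)"
  shows "gapok S (True # replicate j True @ R)"
  using assms(2)
proof (induction j)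
  case 0 then show ?case by simp
next
  case (Suc j)
  have "gapok S ([True] @ True # (replicate j True @ R))"
    by (rule gapok_glue) (use gapok_basic[OF assms(1)] Suc in auto)
  then show ?case by simp
qed

lemma first_split: "True \<in> set u \<Longrightarrow> \<exists>a r. u = replicate a False @ True # r"
proof (induction u)
  case Nil then show ?case by simp
next
  case (Cons x xs)
  show ?case
  proof (cases x)
    case True then show ?thesis by (rule_tac x=0 in exI) auto
  next
    case False
    then obtain a r where "xs = replicate a False @ True # r" using Cons by auto
    then show ?thesis using False by (rule_tac x="Suc a" in exI) auto
  qed
qed

lemma last_split: "True \<in> set u \<Longrightarrow> \<exists>y b. u = y @ True # replicate b False"
proof -
  assume "True \<in> set u"
  then obtain a r where "rev u = replicate a False @ True # r" using first_split[of "rev u"] by auto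
  then have "u = rev r @ True # replicate a False"
    by (metis append.assoc append_Cons append_Nil rev.simps(2) rev_append rev_replicate rev_rev_ident)
  then show ?thesis by blast
qed

lemma no_true: "True \<notin> set u \<Longrightarrow> u = replicate (length u) False"
  by (metis (full_types) in_set_conv_nth replicate_length_same)

lemma rep_inj:
  "replicate s False @ True # w = replicate s' False @ True # w' \<Longrightarrow> s = s' \<and> w = w'"
proof (induction s arbitrary: s')
  case 0 then show ?case by (cases s') auto
next
  case (Suc s) then show ?case by (cases s') auto
qed


lemma second_cond:
  assumes gap: "\<forall>i j. i < j \<and> x i \<and> x j \<and> (\<forall>k. i < k \<and> k < j \<longrightarrow> \<not> x k) \<longrightarrow> nat (j - i - 1) \<in> S"
    and up: "\<forall>i. \<exists>j\<ge>i. x j" and down: "\<forall>i. \<exists>j\<le>i. x j"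
  shows "\<forall>i (k::nat). (\<forall>m<k. \<not> x (i + int m)) \<longrightarrow> (\<exists>s\<in>S. k \<le> s)"
proof (intro allI impI)
  fix i :: int and k :: nat
  assume run: "\<forall>m<k. \<not> x (i + int m)"
  obtain j1 where j1: "j1 \<le> i - 1" "x j1" using down by blast
  obtain j2 where j2: "j2 \<ge> i" "x j2" using up by blast
  have ex1: "\<exists>d::nat. x (i - 1 - int d)" using j1 by (rule_tac x="nat (i - 1 - j1)" in exI) simp
  have ex2: "\<exists>d::nat. x (i + int d)" using j2 by (rule_tac x="nat (j2 - i)" in exI) simp
  define da where "da = (LEAST d::nat. x (i - 1 - int d))"
  define db where "db = (LEAST d::nat. x (i + int d))"
  have xa: "x (i - 1 - int da)" unfolding da_def using LeastI_ex[OF ex1] .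
  have xb: "x (i + int db)" unfolding db_def using LeastI_ex[OF ex2] .
  have na: "\<not> x (i - 1 - int d)" if "d < da" for d using not_less_Least[of d] that unfolding da_def by blast
  have nb: "\<not> x (i + int d)" if "d < db" for d using not_less_Least[of d] that unfolding db_def by blast
  have kdb: "k \<le> db" using run xb by (metis not_le_imp_less)
  have btw: "\<forall>t. i - 1 - int da < t \<and> t < i + int db \<longrightarrow> \<not> x t"
  proof (intro allI impI)
    fix t assume t: "i - 1 - int da < t \<and> t < i + int db"
    show "\<not> x t"
    proof (cases "t < i")
      case True
      then show ?thesis using na[of "nat (i - 1 - t)"] t by auto
    next
      case False
      then show ?thesis using nb[of "nat (t - i)"] t by auto
    qed
  qed
  have "nat ((i + int db) - (i - 1 - int da) - 1) \<in> S"
    using gap[rule_format, of "i - 1 - int da" "i + int db"] xa xb btw by auto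
  moreover have "k \<le> nat ((i + int db) - (i - 1 - int da) - 1)" using kdb by simp
  ultimately show "\<exists>s\<in>S. k \<le> s" by blast
qed

definition per :: "bool list \<Rightarrow> int \<Rightarrow> bool" where
  "per z i = z ! nat (i mod int (length z))"

lemma per_nat: "m < length z \<Longrightarrow> per z (int m) = z ! m"
  unfolding per_def by (simp add: nat_mod_distrib)

lemma per_shift: "z \<noteq> [] \<Longrightarrow> 0 \<le> k \<Longrightarrow> k < int (length z) \<Longrightarrow> per z (int (length z) * q + k) = z ! nat k"
  unfolding per_def by simp

lemma per_in:
  assumes ne: "z \<noteq> []" and z0: "z ! 0" and g: "gapok S (z @ [True])"
  shows "per z \<in> gap_shift S"
proof -
  let ?L = "int (length z)"
  let ?x = "per z"
  have Lpos: "?L > 0" using ne by simp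
  have mult: "?x (?L * q) = True" for q using per_shift[OF ne, of 0 q] z0 Lpos by simp
  have gap: "\<forall>i j. i < j \<and> ?x i \<and> ?x j \<and> (\<forall>k. i < k \<and> k < j \<longrightarrow> \<not> ?x k) \<longrightarrow> nat (j - i - 1) \<in> S"
  proof (intro allI impI)
    fix i j assume H: "i < j \<and> ?x i \<and> ?x j \<and> (\<forall>k. i < k \<and> k < j \<longrightarrow> \<not> ?x k)"
    define q where "q = i div ?L"
    define a where "a = i mod ?L"
    have ia: "i = ?L * q + a" unfolding q_def a_def by simp
    have a0: "0 \<le> a" "a < ?L" unfolding a_def using Lpos by auto
    have jle: "j \<le> ?L * q + ?L"
    proof (rule ccontr)
      assume "\<not> ?thesis"
      then have "i < ?L * q + ?L" "?L * q + ?L < j" using ia a0 by auto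
      moreover have "?x (?L * q + ?L)" using mult[of "q+1"] by (simp add: algebra_simps)
      ultimately show False using H by blast
    qed
    define d where "d = j - ?L * q"
    have d: "a < d" "d \<le> ?L" using jle H ia unfolding d_def by auto
    let ?Z = "z @ [True]"
    have Zk: "?Z ! nat k = ?x (?L * q + k)" if "0 \<le> k" "k \<le> ?L" for k
    proof (cases "k = ?L")
      case True
      then show ?thesis using mult[of "q+1"] by (simp add: algebra_simps nth_append)
    next
      case False
      then have "k < ?L" using that by simp
      then have "nat k < length z" using that by (simp add: nat_less_iff)
      then show ?thesis using per_shift[OF ne, of k q] that \<open>k < ?L\<close> by (simp add: nth_append)
    qed
    have "nat d - nat a - 1 \<in> S"
      using g unfolding gapok_def
    proof (elim allE impE)
      show "nat a < nat d" using d a0 by simp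
      show "nat d < length ?Z" using d a0 by simp
      show "?Z ! nat a" using Zk[of a] a0 H ia by simp
      show "?Z ! nat d" using Zk[of d] a0 d H unfolding d_def by simp
      show "\<forall>k>nat a. k < nat d \<longrightarrow> \<not> ?Z ! k"
      proof (intro allI impI)
        fix k assume k: "nat a < k" "k < nat d"
        have "i < ?L * q + int k" "?L * q + int k < j" using k ia d a0 unfolding d_def by auto
        then have "\<not> ?x (?L * q + int k)" using H by blast
        then show "\<not> ?Z ! k" using Zk[of "int k"] k d by simp
      qed
    qed
    moreover have "nat (j - i - 1) = nat d - nat a - 1" using ia d a0 unfolding d_def by simp
    ultimately show "nat (j - i - 1) \<in> S" by simp
  qed
  have up: "\<forall>i. \<exists>j\<ge>i. ?x j"
  proof
    fix i
    have "i < ?L * (i div ?L + 1)"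
    proof -
      have e: "i = ?L * (i div ?L) + i mod ?L" using div_mult_mod_eq[of i ?L] by (simp add: mult.commute)
      have "i mod ?L < ?L" using Lpos by simp
      then have "i < ?L * (i div ?L) + ?L" using e by linarith
      then show ?thesis by (simp add: algebra_simps)
    qed
    then show "\<exists>j\<ge>i. ?x j" using mult[of "i div ?L + 1"] by (meson less_imp_le)
  qed
  have down: "\<forall>i. \<exists>j\<le>i. ?x j"
  proof
    fix i
    have "?L * (i div ?L) \<le> i"
    proof -
      have e: "i = ?L * (i div ?L) + i mod ?L" using div_mult_mod_eq[of i ?L] by (simp add: mult.commute)
      have "0 \<le> i mod ?L" using Lpos by simp
      then show ?thesis using e by linarith
    qed
    then show "\<exists>j\<le>i. ?x j" using mult[of "i div ?L"] by blast
  qed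
  show ?thesis unfolding gap_shift_def using gap second_cond[OF gap up down] by blast
qed

lemma occ_blocks:
  assumes "x \<in> X" "\<forall>m < length z. x (int m) = z ! m" "z = pre @ y @ post"
  shows "y \<in> blocks X (length y)"
proof -
  have "\<forall>m<length y. y!m = x (int (length pre) + int m)"
  proof (intro allI impI)
    fix m assume m: "m < length y"
    have "x (int (length pre + m)) = z ! (length pre + m)"
      using assms(2)[rule_format, of "length pre + m"] m assms(3) by simp
    then show "y!m = x (int (length pre) + int m)" using assms(3) m by (simp add: nth_append)
  qed
  then show ?thesis unfolding blocks_def using assms(1) by blast
qed

lemma per_blocks:
  assumes "z \<noteq> []" "z ! 0" "gapok S (z @ [True])" "z = pre @ y @ post"
  shows "y \<in> blocks (gap_shift S) (length y)"
proof -
  have h: "\<forall>m<length z. per z (int m) = z!m" using per_nat by blast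
  show ?thesis using occ_blocks[OF per_in[OF assms(1-3)] h assms(4)] .
qed

lemma blocks_gapok:
  assumes "w \<in> blocks (gap_shift S) n"
  shows "length w = n \<and> gapok S w \<and> (\<forall>i k. i + k \<le> n \<longrightarrow> (\<forall>m<k. \<not> w!(i+m)) \<longrightarrow> (\<exists>s\<in>S. k \<le> s))"
proof -
  obtain x i0 where x: "x \<in> gap_shift S" and wl: "length w = n" and wx: "\<forall>m<n. w ! m = x (i0 + int m)"
    using assms unfolding blocks_def by blast
  have g1: "\<forall>i j. i < j \<and> x i \<and> x j \<and> (\<forall>k. i < k \<and> k < j \<longrightarrow> \<not> x k) \<longrightarrow> nat (j - i - 1) \<in> S"
    and g2: "\<forall>i (k::nat). (\<forall>m<k. \<not> x (i + int m)) \<longrightarrow> (\<exists>s\<in>S. k \<le> s)"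
    using x unfolding gap_shift_def by blast+
  have "gapok S w" unfolding gapok_def
  proof (intro allI impI)
    fix i j assume a: "i < j" "j < length w" "w ! i" "w ! j" and b: "\<forall>k. i < k \<longrightarrow> k < j \<longrightarrow> \<not> w ! k"
    have c: "\<forall>k. i0 + int i < k \<and> k < i0 + int j \<longrightarrow> \<not> x k"
    proof (intro allI impI)
      fix k assume k: "i0 + int i < k \<and> k < i0 + int j"
      then have "\<not> w ! nat (k - i0)" using b by auto
      moreover have "nat (k - i0) < n" using k a wl by auto
      ultimately show "\<not> x k" using wx[rule_format, of "nat (k - i0)"] k a wl by auto
    qed
    have "nat ((i0 + int j) - (i0 + int i) - 1) \<in> S"
      using g1[rule_format, of "i0 + int i" "i0 + int j"] a c wx wl by auto
    then show "j - i - 1 \<in> S" using a by (simp add: nat_diff_distrib)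
  qed
  moreover have "\<forall>i k. i + k \<le> n \<longrightarrow> (\<forall>m<k. \<not> w!(i+m)) \<longrightarrow> (\<exists>s\<in>S. k \<le> s)"
  proof (intro allI impI)
    fix i k assume "i + k \<le> n" "\<forall>m<k. \<not> w!(i+m)"
    then have "\<forall>m<k. \<not> x ((i0 + int i) + int m)" using wx by (auto simp: algebra_simps)
    then show "\<exists>s\<in>S. k \<le> s" using g2 by blast
  qed
  ultimately show ?thesis using wl by blast
qed

lemma gap_shift_mono: "F \<subseteq> S \<Longrightarrow> gap_shift F \<subseteq> gap_shift S"
  unfolding gap_shift_def by blast

lemma blocks_mono: "X \<subseteq> Y \<Longrightarrow> blocks X n \<subseteq> blocks Y n"
  unfolding blocks_def by blast

lemma finite_blocks: "finite (blocks X n)"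
proof -
  have "blocks X n \<subseteq> {xs. set xs \<subseteq> (UNIV::bool set) \<and> length xs = n}" unfolding blocks_def by auto
  then show ?thesis using finite_lists_length_eq[of "UNIV::bool set"] finite_subset by auto
qed


definition T :: "nat set \<Rightarrow> nat \<Rightarrow> bool list set" where
  "T S k = {w. length w = k \<and> gapok S (True # w)}"

lemma finite_T: "finite (T S k)"
proof -
  have "T S k \<subseteq> {xs. set xs \<subseteq> (UNIV::bool set) \<and> length xs = k}" unfolding T_def by auto
  then show ?thesis using finite_lists_length_eq[of "UNIV::bool set"] finite_subset by auto
qed

lemma T_sub: "T S k \<subseteq> {replicate k False} \<union>
   (\<Union>s\<in>S \<inter> {..<k}. (\<lambda>w'. replicate s False @ True # w') ` T S (k - s - 1))"
proof
  fix w assume w: "w \<in> T S k"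
  show "w \<in> {replicate k False} \<union> (\<Union>s\<in>S \<inter> {..<k}. (\<lambda>w'. replicate s False @ True # w') ` T S (k - s - 1))"
  proof (cases "True \<in> set w")
    case False
    then show ?thesis using no_true[of w] w unfolding T_def by auto
  next
    case True
    then obtain s w' where sw: "w = replicate s False @ True # w'" using first_split by blast
    have g: "gapok S (True # replicate s False @ True # w')" using w sw unfolding T_def by simp
    have "s \<in> S" using gapok_basic_rev[OF g] .
    moreover have "gapok S (True # w')" using gapok_suffix[of S "True # replicate s False" "True # w'"] g by simp
    moreover have "k = s + 1 + length w'" using w sw unfolding T_def by simp
    ultimately have sI: "s \<in> S \<inter> {..<k}" and wT: "w' \<in> T S (k - s - 1)" unfolding T_def by auto
    have "w \<in> (\<lambda>w'. replicate s False @ True # w') ` T S (k - s - 1)" using sw wT by blast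
    then show ?thesis using sI by blast
  qed
qed

lemma pow_split: "(\<rho>::real) > 0 \<Longrightarrow> s < k \<Longrightarrow> \<rho> ^ (k - s - 1) = \<rho> ^ k * (1/\<rho>) ^ (s + 1)"
proof -
  assume r: "\<rho> > 0" and sk: "s < k"
  have "\<rho> ^ (k - s - 1) * \<rho> ^ (s + 1) = \<rho> ^ ((k - s - 1) + (s + 1))" by (rule power_add[symmetric])
  also have "(k - s - 1) + (s + 1) = k" using sk by simp
  finally have "\<rho> ^ k = \<rho> ^ (k - s - 1) * \<rho> ^ (s + 1)" by simp
  then show ?thesis using r by (simp add: power_one_over field_simps)
qed

lemma T_card:
  assumes r1: "1 \<le> \<rho>" and H: "\<forall>K. (\<Sum>s\<in>S\<inter>{..<K}. (1/\<rho>)^(s+1)) \<le> 1"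
  shows "real (card (T S k)) \<le> (k + 1) * \<rho> ^ k"
proof (induction k rule: less_induct)
  case (less k)
  let ?I = "S \<inter> {..<k}"
  let ?f = "\<lambda>s. (\<lambda>w'. replicate s False @ True # w') ` T S (k - s - 1)"
  have fin: "finite ?I" by simp
  have a1: "card (T S k) \<le> card ({replicate k False} \<union> (\<Union>s\<in>?I. ?f s))"
    by (rule card_mono[OF _ T_sub]) (auto intro!: finite_T)
  have a2: "card ({replicate k False} \<union> (\<Union>s\<in>?I. ?f s)) \<le> card {replicate k False} + card (\<Union>s\<in>?I. ?f s)"
    by (rule card_Un_le)
  have a3: "card (\<Union>s\<in>?I. ?f s) \<le> (\<Sum>s\<in>?I. card (?f s))" by (rule card_UN_le[OF fin])
  have a4: "(\<Sum>s\<in>?I. card (?f s)) \<le> (\<Sum>s\<in>?I. card (T S (k - s - 1)))"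
    by (rule sum_mono) (rule card_image_le[OF finite_T])
  have c0: "card (T S k) \<le> 1 + (\<Sum>s\<in>?I. card (T S (k - s - 1)))" using a1 a2 a3 a4 by simp
  have c1: "real (card (T S k)) \<le> 1 + (\<Sum>s\<in>?I. real (card (T S (k - s - 1))))"
    using of_nat_mono[OF c0, where 'a=real] by (simp add: of_nat_sum)
  have "(\<Sum>s\<in>?I. real (card (T S (k - s - 1)))) \<le> (\<Sum>s\<in>?I. k * \<rho>^k * (1/\<rho>)^(s+1))"
  proof (rule sum_mono)
    fix s assume s: "s \<in> ?I"
    then have sk: "s < k" by simp
    have "real (card (T S (k - s - 1))) \<le> (real (k - s - 1) + 1) * \<rho> ^ (k - s - 1)"
      using less[of "k - s - 1"] sk by simp
    also have "\<dots> \<le> k * \<rho> ^ (k - s - 1)"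
      using sk r1 by (intro mult_right_mono) auto
    also have "\<dots> = k * \<rho>^k * (1/\<rho>)^(s+1)" using pow_split[of \<rho> s k] r1 sk by simp
    finally show "real (card (T S (k - s - 1))) \<le> k * \<rho>^k * (1/\<rho>)^(s+1)" .
  qed
  also have "\<dots> = k * \<rho>^k * (\<Sum>s\<in>?I. (1/\<rho>)^(s+1))" by (simp add: sum_distrib_left)
  also have "\<dots> \<le> k * \<rho>^k * 1"
  proof (rule mult_left_mono)
    show "(\<Sum>s\<in>?I. (1/\<rho>)^(s+1)) \<le> 1" using H by blast
    show "0 \<le> real k * \<rho>^k" using r1 by simp
  qed
  finally have "real (card (T S k)) \<le> 1 + k * \<rho>^k" using c1 by simp
  also have "\<dots> \<le> (k + 1) * \<rho>^k" using r1 one_le_power[OF r1, of k] by (simp add: algebra_simps)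
  finally show ?case by (simp add: algebra_simps)
qed

lemma blocks_sub: "blocks (gap_shift S) n \<subseteq> {replicate n False} \<union>
   (\<Union>a\<in>{..<n}. (\<lambda>w'. replicate a False @ True # w') ` T S (n - a - 1))"
proof
  fix w assume w: "w \<in> blocks (gap_shift S) n"
  then have wl: "length w = n" and g: "gapok S w" using blocks_gapok by blast+
  show "w \<in> {replicate n False} \<union> (\<Union>a\<in>{..<n}. (\<lambda>w'. replicate a False @ True # w') ` T S (n - a - 1))"
  proof (cases "True \<in> set w")
    case False
    then show ?thesis using no_true[of w] wl by auto
  next
    case True
    then obtain a w' where sw: "w = replicate a False @ True # w'" using first_split by blast
    have "gapok S (True # w')" using gapok_suffix[of S "replicate a False" "True # w'"] g sw by simp
    moreover have "n = a + 1 + length w'" using wl sw by simp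
    ultimately have sI: "a \<in> {..<n}" and wT: "w' \<in> T S (n - a - 1)" unfolding T_def by auto
    have "w \<in> (\<lambda>w'. replicate a False @ True # w') ` T S (n - a - 1)" using sw wT by blast
    then show ?thesis using sI by blast
  qed
qed

lemma blocks_upper:
  assumes r1: "1 \<le> \<rho>" and H: "\<forall>K. (\<Sum>s\<in>S\<inter>{..<K}. (1/\<rho>)^(s+1)) \<le> 1"
  shows "real (card (blocks (gap_shift S) n)) \<le> (n + 1)^2 * \<rho> ^ n"
proof -
  let ?f = "\<lambda>a. (\<lambda>w'. replicate a False @ True # w') ` T S (n - a - 1)"
  have a1: "card (blocks (gap_shift S) n) \<le> card ({replicate n False} \<union> (\<Union>a\<in>{..<n}. ?f a))"
    by (rule card_mono[OF _ blocks_sub]) (auto intro!: finite_T)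
  have a2: "card ({replicate n False} \<union> (\<Union>a\<in>{..<n}. ?f a)) \<le> card {replicate n False} + card (\<Union>a\<in>{..<n}. ?f a)"
    by (rule card_Un_le)
  have a3: "card (\<Union>a\<in>{..<n}. ?f a) \<le> (\<Sum>a\<in>{..<n}. card (?f a))" by (rule card_UN_le) simp
  have a4: "(\<Sum>a\<in>{..<n}. card (?f a)) \<le> (\<Sum>a\<in>{..<n}. card (T S (n - a - 1)))"
    by (rule sum_mono) (rule card_image_le[OF finite_T])
  have c0: "card (blocks (gap_shift S) n) \<le> 1 + (\<Sum>a\<in>{..<n}. card (T S (n - a - 1)))" using a1 a2 a3 a4 by simp
  have c1: "real (card (blocks (gap_shift S) n)) \<le> 1 + (\<Sum>a\<in>{..<n}. real (card (T S (n - a - 1))))"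
    using of_nat_mono[OF c0, where 'a=real] by (simp add: of_nat_sum)
  have "(\<Sum>a\<in>{..<n}. real (card (T S (n - a - 1)))) \<le> (\<Sum>a\<in>{..<n}. n * \<rho>^n)"
  proof (rule sum_mono)
    fix a assume "a \<in> {..<n}"
    then have an: "a < n" by simp
    have "real (card (T S (n - a - 1))) \<le> (real (n - a - 1) + 1) * \<rho> ^ (n - a - 1)"
      using T_card[OF r1 H, of "n - a - 1"] an by simp
    also have "\<dots> \<le> n * \<rho> ^ n"
      using an r1 by (intro mult_mono power_increasing) auto
    finally show "real (card (T S (n - a - 1))) \<le> n * \<rho>^n" .
  qed
  also have "\<dots> = n * (n * \<rho>^n)" by simp
  finally have "real (card (blocks (gap_shift S) n)) \<le> 1 + n * (n * \<rho>^n)" using c1 by simp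
  also have "\<dots> \<le> (n + 1)^2 * \<rho>^n"
  proof -
    have p: "1 \<le> \<rho>^n" by (rule one_le_power[OF r1])
    have q: "0 \<le> real n * (2 * \<rho>^n)" using r1 by simp
    have e: "(real n + 1)^2 * \<rho>^n = \<rho>^n + n * (n * \<rho>^n) + n * (2 * \<rho>^n)"
      by (simp add: algebra_simps power2_eq_square)
    have "1 + n * (n * \<rho>^n) \<le> (real n + 1)^2 * \<rho>^n" using p q e by linarith
    then show ?thesis by (simp add: add.commute)
  qed
  finally show ?thesis by (simp add: add.commute)
qed

definition V :: "nat set \<Rightarrow> nat \<Rightarrow> bool list set" where
  "V F k = {w. length w = k \<and> (\<exists>j. gapok F (True # w @ replicate j False @ [True]))}"

lemma finite_V: "finite (V F k)"
proof -
  have "V F k \<subseteq> {xs. set xs \<subseteq> (UNIV::bool set) \<and> length xs = k}" unfolding V_def by auto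
  then show ?thesis using finite_lists_length_eq[of "UNIV::bool set"] finite_subset by auto
qed

lemma V_card:
  assumes fin: "finite F" and ne: "F \<noteq> {}" and r1: "1 \<le> r"
    and H: "1 \<le> (\<Sum>s\<in>F. (1/r)^(s+1))"
  shows "r ^ k / r ^ Max F \<le> real (card (V F k))"
proof (induction k rule: less_induct)
  case (less k)
  let ?M = "Max F"
  have MF: "?M \<in> F" using Max_in[OF fin ne] .
  show ?case
  proof (cases "k \<le> ?M")
    case True
    have "replicate k False \<in> V F k"
      unfolding V_def
    proof (safe intro!: exI[of _ "?M - k"])
      have eq0: "replicate k False @ replicate (?M - k) False = replicate ?M False"
        using replicate_add[of k "?M - k" False] True by simp
      have eq: "True # replicate k False @ replicate (?M - k) False @ [True] = True # replicate ?M False @ [True]"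
        by (simp add: eq0[symmetric])
      show "gapok F (True # replicate k False @ replicate (?M - k) False @ [True])"
        by (subst eq) (rule gapok_basic[OF MF])
    qed simp
    then have "V F k \<noteq> {}" by blast
    then have "card (V F k) \<ge> 1" using finite_V[of F k] by (simp add: card_gt_0_iff Suc_le_eq)
    moreover have "r ^ k / r ^ ?M \<le> 1" using r1 True by (simp add: power_increasing)
    ultimately show ?thesis by simp
  next
    case False
    define h where "h = (\<lambda>p. replicate (fst p) False @ True # snd p)"
    let ?Sig = "Sigma F (\<lambda>s. V F (k - s - 1))"
    have sub: "h ` ?Sig \<subseteq> V F k"
    proof
      fix y assume "y \<in> h ` ?Sig"
      then obtain p where p: "p \<in> ?Sig" "y = h p" by blast
      obtain s w where sw: "p = (s, w)" by (cases p)
      have s: "s \<in> F" and w: "w \<in> V F (k - s - 1)" using p sw by auto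
      have y: "y = replicate s False @ True # w" using p sw unfolding h_def by simp
      obtain j where j: "gapok F (True # w @ replicate j False @ [True])" and wl: "length w = k - s - 1"
        using w unfolding V_def by auto
      have sM: "s \<le> ?M" using Max_ge[OF fin s] .
      have "gapok F ((True # replicate s False) @ True # (w @ replicate j False @ [True]))"
        by (rule gapok_glue) (use gapok_basic[OF s] j in auto)
      then show "y \<in> V F k" unfolding V_def using y wl sM False by (auto intro!: exI[of _ j])
    qed
    have inj: "inj_on h ?Sig"
    proof (rule inj_onI)
      fix p p' assume "p \<in> ?Sig" "p' \<in> ?Sig" "h p = h p'"
      then have "fst p = fst p' \<and> snd p = snd p'" using rep_inj unfolding h_def by blast
      then show "p = p'" by (simp add: prod_eq_iff)
    qed
    have "card ?Sig = card (h ` ?Sig)" using card_image[OF inj] by simp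
    also have "\<dots> \<le> card (V F k)" by (rule card_mono[OF finite_V sub])
    finally have c0: "card ?Sig \<le> card (V F k)" .
    have "card ?Sig = (\<Sum>s\<in>F. card (V F (k - s - 1)))" by (rule card_SigmaI) (use fin finite_V in auto)
    then have c1: "(\<Sum>s\<in>F. card (V F (k - s - 1))) \<le> card (V F k)" using c0 by simp
    have "(\<Sum>s\<in>F. r ^ k / r ^ ?M * (1/r)^(s+1)) \<le> (\<Sum>s\<in>F. real (card (V F (k - s - 1))))"
    proof (rule sum_mono)
      fix s assume s: "s \<in> F"
      then have sk: "s < k" using Max_ge[OF fin s] False by simp
      have "r ^ k / r ^ ?M * (1/r)^(s+1) = r ^ (k - s - 1) / r ^ ?M"
        using pow_split[of r s k] sk r1 by simp
      also have "\<dots> \<le> real (card (V F (k - s - 1)))" using less[of "k - s - 1"] sk by simp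
      finally show "r ^ k / r ^ ?M * (1/r)^(s+1) \<le> real (card (V F (k - s - 1)))" .
    qed
    also have "\<dots> \<le> real (card (V F k))"
      using of_nat_mono[OF c1, where 'a=real] by (simp add: of_nat_sum)
    finally have "r ^ k / r ^ ?M * (\<Sum>s\<in>F. (1/r)^(s+1)) \<le> real (card (V F k))"
      by (simp add: sum_distrib_left)
    moreover have "r ^ k / r ^ ?M \<le> r ^ k / r ^ ?M * (\<Sum>s\<in>F. (1/r)^(s+1))"
    proof -
      have nn: "0 \<le> r ^ k / r ^ ?M" using r1 by simp
      show ?thesis using mult_left_mono[OF H nn] by simp
    qed
    ultimately show ?thesis by linarith
  qed
qed

lemma V_blocks: "Cons True ` V F k \<subseteq> blocks (gap_shift F) (Suc k)"
proof
  fix y assume "y \<in> Cons True ` V F k"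
  then obtain w j where y: "y = True # w" and wl: "length w = k" and j: "gapok F (True # w @ replicate j False @ [True])"
    unfolding V_def by auto
  have "y \<in> blocks (gap_shift F) (length y)"
    by (rule per_blocks[of "True # w @ replicate j False" F "[]" y "replicate j False"]) (use j y in auto)
  then show "y \<in> blocks (gap_shift F) (Suc k)" using y wl by simp
qed

lemma blocks_lower:
  assumes fin: "finite F" and ne: "F \<noteq> {}" and r1: "1 \<le> r"
    and H: "1 \<le> (\<Sum>s\<in>F. (1/r)^(s+1))" and FS: "F \<subseteq> S"
  shows "r ^ k / r ^ Max F \<le> real (card (blocks (gap_shift S) (Suc k)))"
proof -
  have "card (V F k) = card (Cons True ` V F k)" by (simp add: card_image)
  also have "\<dots> \<le> card (blocks (gap_shift S) (Suc k))"
  proof (rule card_mono[OF finite_blocks])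
    show "Cons True ` V F k \<subseteq> blocks (gap_shift S) (Suc k)"
      using V_blocks blocks_mono[OF gap_shift_mono[OF FS]] by blast
  qed
  finally show ?thesis using V_card[OF fin ne r1 H, of k] by linarith
qed


lemma lim_low: "(\<lambda>n. log 2 c / real n + log 2 r) \<longlonglongrightarrow> log 2 r"
proof -
  have "(\<lambda>n. log 2 c * (1 / real n)) \<longlonglongrightarrow> log 2 c * 0"
    by (intro tendsto_mult tendsto_const lim_inverse_n')
  then have "(\<lambda>n. log 2 c / real n) \<longlonglongrightarrow> 0" by simp
  then show ?thesis using tendsto_add[OF _ tendsto_const, of _ 0 sequentially "log 2 r"] by simp
qed

lemma lim_up: "(\<lambda>n. 2 * (log 2 (real n + 1) / real n) + log 2 r) \<longlonglongrightarrow> log 2 r"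
proof -
  have "(\<lambda>n. log 2 (real n + 1) / real n) \<longlonglongrightarrow> 0" by real_asymp
  then have "(\<lambda>n. 2 * (log 2 (real n + 1) / real n)) \<longlonglongrightarrow> 2 * 0"
    by (intro tendsto_mult tendsto_const)
  then show ?thesis using tendsto_add[OF _ tendsto_const, of _ 0 sequentially "log 2 r"] by simp
qed

lemma low_seq:
  assumes c: "0 < c" and r: "1 \<le> r" and n: "1 \<le> n" and b: "c * r ^ n \<le> real (card (blocks X n))"
  shows "log 2 c / real n + log 2 r \<le> log 2 (real (card (blocks X n))) / real n"
proof -
  have pos: "0 < c * r ^ n" using c r by simp
  have "log 2 (c * r ^ n) \<le> log 2 (real (card (blocks X n)))"
    using b pos by (subst log_le_cancel_iff) auto
  moreover have "log 2 (c * r ^ n) = log 2 c + real n * log 2 r"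
    using c r by (simp add: log_mult_pos log_nat_power)
  ultimately have "log 2 c + real n * log 2 r \<le> log 2 (real (card (blocks X n)))" by simp
  then have "(log 2 c + real n * log 2 r) / real n \<le> log 2 (real (card (blocks X n))) / real n"
    using n by (intro divide_right_mono) auto
  moreover have "(log 2 c + real n * log 2 r) / real n = log 2 c / real n + log 2 r"
    using n by (simp add: field_simps)
  ultimately show ?thesis by simp
qed

lemma up_seq:
  assumes r: "1 \<le> \<rho>" and n: "1 \<le> n" and b: "real (card (blocks X n)) \<le> (real n + 1)^2 * \<rho> ^ n"
  shows "log 2 (real (card (blocks X n))) / real n \<le> 2 * (log 2 (real n + 1) / real n) + log 2 \<rho>"
proof (cases "card (blocks X n) = 0")
  case True
  have "0 \<le> log 2 (real n + 1)" by simp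
  moreover have "0 \<le> log 2 \<rho>" using r by simp
  ultimately show ?thesis using True by (simp add: log_def)
next
  case False
  have pos: "0 < real (card (blocks X n))" using False by simp
  have "log 2 (real (card (blocks X n))) \<le> log 2 ((real n + 1)^2 * \<rho> ^ n)"
    using b pos r by (subst log_le_cancel_iff) auto
  moreover have "log 2 ((real n + 1)^2 * \<rho> ^ n) = 2 * log 2 (real n + 1) + real n * log 2 \<rho>"
    using r by (simp add: log_mult_pos log_nat_power)
  ultimately have "log 2 (real (card (blocks X n))) \<le> 2 * log 2 (real n + 1) + real n * log 2 \<rho>" by simp
  then have "log 2 (real (card (blocks X n))) / real n \<le> (2 * log 2 (real n + 1) + real n * log 2 \<rho>) / real n"
    using n by (intro divide_right_mono) auto
  moreover have "(2 * log 2 (real n + 1) + real n * log 2 \<rho>) / real n = 2 * (log 2 (real n + 1) / real n) + log 2 \<rho>"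
    using n by (simp add: field_simps)
  ultimately show ?thesis by simp
qed

lemma ent_lower:
  assumes h: "has_entropy X h" and c: "0 < c" and r: "1 \<le> r"
    and b: "\<forall>n\<ge>1. c * r ^ n \<le> real (card (blocks X n))"
  shows "log 2 r \<le> h"
proof (rule LIMSEQ_le[OF lim_low[of c r]])
  show "(\<lambda>n. log 2 (real (card (blocks X n))) / real n) \<longlonglongrightarrow> h" using h unfolding has_entropy_def .
  show "\<exists>N. \<forall>n\<ge>N. log 2 c / real n + log 2 r \<le> log 2 (real (card (blocks X n))) / real n"
    using low_seq[OF c r] b by blast
qed

lemma ent_upper:
  assumes h: "has_entropy X h" and r: "1 \<le> \<rho>"
    and b: "\<forall>n. real (card (blocks X n)) \<le> (real n + 1)^2 * \<rho> ^ n"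
  shows "h \<le> log 2 \<rho>"
proof (rule LIMSEQ_le[OF _ lim_up[of \<rho>]])
  show "(\<lambda>n. log 2 (real (card (blocks X n))) / real n) \<longlonglongrightarrow> h" using h unfolding has_entropy_def .
  show "\<exists>N. \<forall>n\<ge>N. log 2 (real (card (blocks X n))) / real n \<le> 2 * (log 2 (real n + 1) / real n) + log 2 \<rho>"
    using up_seq[OF r] b by blast
qed

lemma ent_exact:
  assumes c: "0 < c" and r: "1 \<le> r"
    and b1: "\<forall>n\<ge>1. c * r ^ n \<le> real (card (blocks X n))"
    and b2: "\<forall>n. real (card (blocks X n)) \<le> (real n + 1)^2 * r ^ n"
  shows "has_entropy X (log 2 r)"
  unfolding has_entropy_def
proof (rule tendsto_sandwich[OF _ _ lim_low[of c r] lim_up[of r]])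
  show "\<forall>\<^sub>F n in sequentially. log 2 c / real n + log 2 r \<le> log 2 (real (card (blocks X n))) / real n"
    using low_seq[OF c r] b1 unfolding eventually_sequentially by blast
  show "\<forall>\<^sub>F n in sequentially. log 2 (real (card (blocks X n))) / real n \<le> 2 * (log 2 (real n + 1) / real n) + log 2 r"
    using up_seq[OF r] b2 unfolding eventually_sequentially by blast
qed


definition phi :: real where "phi = (1 + sqrt 5) / 2"
definition qq :: real where "qq = 1 / phi"

lemma phi_gt1: "1 < phi"
proof -
  have "1 < sqrt 5" by simp
  then show ?thesis unfolding phi_def by simp
qed

lemma phi_sq: "phi^2 = phi + 1"
proof -
  have s: "sqrt 5 ^ 2 = 5" by simp
  have "phi^2 = (1 + 2 * sqrt 5 + sqrt 5 ^ 2) / 4" unfolding phi_def by (simp add: power2_eq_square field_simps algebra_simps)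
  also have "\<dots> = phi + 1" unfolding s phi_def by simp
  finally show ?thesis .
qed

lemma qq_pos: "0 < qq" and qq_lt1: "qq < 1"
  using phi_gt1 unfolding qq_def by auto

lemma qq_sum: "qq + qq^2 = 1"
proof -
  have p: "phi > 0" using phi_gt1 by simp
  then have "qq + qq^2 = (phi + 1) / phi^2" unfolding qq_def by (simp add: field_simps power2_eq_square)
  then show ?thesis using phi_sq p by simp
qed

definition PS :: "nat set \<Rightarrow> nat \<Rightarrow> real" where
  "PS S K = (\<Sum>s\<in>S \<inter> {..<K}. qq ^ (s + 1))"

lemma geo:
  assumes "0 \<le> (c::real)" "a \<le> K"
  shows "(1 - c) * (\<Sum>s\<in>{a..<K}. c ^ (s + 1)) = c ^ (a + 1) - c ^ (K + 1)"
  using assms(2)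
proof (induction K rule: dec_induct)
  case base then show ?case by simp
next
  case (step K)
  have e: "(\<Sum>s\<in>{a..<Suc K}. c^(s+1)) = (\<Sum>s\<in>{a..<K}. c^(s+1)) + c^(K+1)" using step(1) by simp
  show ?case unfolding e distrib_left step.IH by (simp add: algebra_simps)
qed

lemma PS_mono: "K \<le> K' \<Longrightarrow> PS S K \<le> PS S K'"
  unfolding PS_def by (rule sum_mono2) (auto simp: qq_pos less_imp_le)

lemma PS_nonneg: "0 \<le> PS S K"
  unfolding PS_def by (rule sum_nonneg) (simp add: qq_pos less_imp_le)

definition UL :: "nat set \<Rightarrow> bool" where
  "UL S \<longleftrightarrow> (\<forall>K. PS S K \<le> 1) \<and> (\<forall>e>0. \<exists>K. 1 - e < PS S K)"

lemma shift_set: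
  fixes S :: "nat set"
  assumes "0 \<in> S" "1 \<notin> S"
  shows "S \<inter> {..<K+2} = insert 0 ((\<lambda>s. s + 2) ` ({s. s + 2 \<in> S} \<inter> {..<K}))"
proof (rule set_eqI)
  fix x :: nat
  show "x \<in> S \<inter> {..<K+2} \<longleftrightarrow> x \<in> insert 0 ((\<lambda>s. s + 2) ` ({s. s + 2 \<in> S} \<inter> {..<K}))"
  proof (cases "x < 2")
    case True
    then have "x = 0 \<or> x = 1" by auto
    then show ?thesis using assms by auto
  next
    case False
    then have "x = (x - 2) + 2" by simp
    then show ?thesis using False by (auto simp: image_iff)
  qed
qed

lemma PS_shift:
  assumes "0 \<in> S" "1 \<notin> S"
  shows "PS S (K + 2) = qq + qq^2 * PS {s. s + 2 \<in> S} K"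
proof -
  let ?S' = "{s. s + 2 \<in> S}"
  have "PS S (K + 2) = (\<Sum>s\<in>insert 0 ((\<lambda>s. s + 2) ` (?S' \<inter> {..<K})). qq ^ (s + 1))"
    unfolding PS_def using shift_set[OF assms] by simp
  also have "\<dots> = qq + (\<Sum>s\<in>(\<lambda>s. s + 2) ` (?S' \<inter> {..<K}). qq ^ (s + 1))"
    by (subst sum.insert) auto
  also have "(\<Sum>s\<in>(\<lambda>s. s + 2) ` (?S' \<inter> {..<K}). qq ^ (s + 1)) = (\<Sum>s\<in>?S' \<inter> {..<K}. qq ^ (s + 2 + 1))"
    by (subst sum.reindex) (auto simp: inj_on_def)
  also have "\<dots> = qq^2 * PS ?S' K"
    unfolding PS_def by (simp add: sum_distrib_left power_add[symmetric] algebra_simps)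
  finally show ?thesis .
qed

lemma UL_step:
  assumes UL: "UL S" and a: "0 \<in> S" "1 \<notin> S"
  shows "UL {s. s + 2 \<in> S}"
proof -
  let ?S' = "{s. s + 2 \<in> S}"
  have q2: "qq^2 = 1 - qq" using qq_sum by simp
  have q2p: "0 < qq^2" using qq_pos by simp
  have U: "PS ?S' K \<le> 1" for K
  proof -
    have "qq + qq^2 * PS ?S' K \<le> 1" using UL PS_shift[OF a, of K] unfolding UL_def by metis
    then have "qq^2 * PS ?S' K \<le> qq^2 * 1" using q2 by simp
    then show ?thesis using q2p by (simp add: mult_le_cancel_left_pos)
  qed
  have L: "\<exists>K. 1 - e < PS ?S' K" if e: "e > 0" for e
  proof -
    obtain K where K: "1 - e * qq^2 < PS S K" using UL e q2p unfolding UL_def by (meson mult_pos_pos)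
    have "PS S K \<le> PS S (K + 2)" by (rule PS_mono) simp
    then have "1 - e * qq^2 < qq + qq^2 * PS ?S' K" using K PS_shift[OF a, of K] by linarith
    moreover have "qq^2 * (1 - e) = qq^2 - e * qq^2" by (simp add: algebra_simps)
    ultimately have "qq^2 * (1 - e) < qq^2 * PS ?S' K" using q2 by linarith
    then show ?thesis using q2p by (meson mult_less_cancel_left_pos)
  qed
  show ?thesis unfolding UL_def using U L by blast
qed

lemma sum_1_K: "(\<Sum>s\<in>{1..<K}. qq ^ (s + 1)) \<le> 1 - qq ^ (K + 1)"
proof (cases "1 \<le> K")
  case True
  have "(1 - qq) * (\<Sum>s\<in>{1..<K}. qq ^ (s + 1)) = qq ^ 2 - qq ^ (K + 1)"
    using geo[of qq 1 K] True qq_pos by (simp add: power2_eq_square)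
  then have e: "qq^2 * (\<Sum>s\<in>{1..<K}. qq ^ (s + 1)) = qq ^ 2 - qq ^ (K + 1)"
    using qq_sum by (metis add_diff_cancel_left')
  have "qq^2 * (\<Sum>s\<in>{1..<K}. qq ^ (s + 1)) \<le> qq^2 * (1 - qq ^ (K + 1))"
  proof -
    have "qq ^ (K + 1) * qq^2 \<le> qq ^ (K + 1)"
      using qq_pos qq_lt1 by (simp add: mult_left_le power_le_one less_imp_le)
    then show ?thesis using e by (simp add: algebra_simps)
  qed
  then show ?thesis using qq_pos by (simp add: mult_le_cancel_left_pos)
next
  case False
  then have "K = 0" by simp
  then show ?thesis using qq_pos qq_lt1 by simp
qed

lemma base_case:
  assumes UL: "UL S" and n: "\<not> (0 \<in> S \<and> 1 \<notin> S)"
  shows "S = {s. 1 \<le> s} \<or> S = {0, 1}"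
proof (cases "0 \<in> S")
  case False
  have "S = {s. 1 \<le> s}"
  proof (rule ccontr)
    assume "S \<noteq> {s. 1 \<le> s}"
    then obtain s0 where s0: "1 \<le> s0" "s0 \<notin> S" using False by (auto simp: not_less_eq_eq) (metis Suc_leI neq0_conv)
    have bound: "PS S K \<le> 1 - qq ^ (s0 + 1)" for K
    proof (cases "s0 < K")
      case True
      have sub: "S \<inter> {..<K} \<subseteq> {1..<K} - {s0}" using False s0 by (auto simp: Suc_le_eq) (metis neq0_conv)
      have "PS S K \<le> (\<Sum>s\<in>{1..<K} - {s0}. qq ^ (s + 1))"
        unfolding PS_def by (rule sum_mono2[OF _ sub]) (auto simp: qq_pos less_imp_le)
      also have "\<dots> = (\<Sum>s\<in>{1..<K}. qq ^ (s + 1)) - qq ^ (s0 + 1)"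
        using True s0 by (subst sum_diff1) auto
      also have "\<dots> \<le> 1 - qq ^ (s0 + 1)"
      proof -
        have "0 \<le> qq^(K+1)" using qq_pos by simp
        then show ?thesis using sum_1_K[of K] by linarith
      qed
      finally show ?thesis .
    next
      case False2: False
      have sub: "S \<inter> {..<K} \<subseteq> {1..<K}" using False by (auto simp: Suc_le_eq) (metis neq0_conv)
      have "PS S K \<le> (\<Sum>s\<in>{1..<K}. qq ^ (s + 1))"
        unfolding PS_def by (rule sum_mono2[OF _ sub]) (auto simp: qq_pos less_imp_le)
      also have "\<dots> \<le> 1 - qq ^ (K + 1)" by (rule sum_1_K)
      also have "qq ^ (s0 + 1) \<le> qq ^ (K + 1)"
        using False2 qq_pos qq_lt1 by (intro power_decreasing) auto
      then have "1 - qq ^ (K + 1) \<le> 1 - qq ^ (s0 + 1)" by simp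
      finally show ?thesis .
    qed
    obtain K where "1 - qq ^ (s0 + 1) < PS S K" using UL qq_pos unfolding UL_def by (meson zero_less_power)
    then show False using bound[of K] by simp
  qed
  then show ?thesis by simp
next
  case True
  then have one: "1 \<in> S" using n by blast
  have "S = {0, 1}"
  proof (rule ccontr)
    assume "S \<noteq> {0, 1}"
    then have "\<exists>s0\<in>S. s0 \<notin> {0, 1}" using True one by blast
    then obtain s0 where s0': "s0 \<in> S" "s0 \<notin> {0, 1}" by blast
    then have s0: "s0 \<in> S" "2 \<le> s0" by auto
    have sub: "{0, 1, s0} \<subseteq> S \<inter> {..<s0 + 1}" using True one s0 by auto
    have "qq ^ 1 + qq ^ 2 + qq ^ (s0 + 1) = (\<Sum>s\<in>{0, 1, s0}. qq ^ (s + 1))" using s0 by (simp add: power2_eq_square)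
    also have "\<dots> \<le> PS S (s0 + 1)"
      unfolding PS_def by (rule sum_mono2[OF _ sub]) (auto simp: qq_pos less_imp_le)
    also have "\<dots> \<le> 1" using UL unfolding UL_def by blast
    finally have "qq + qq^2 + qq ^ (s0 + 1) \<le> 1" by simp
    moreover have "0 < qq ^ (s0 + 1)" using qq_pos by simp
    ultimately show False using qq_sum by linarith
  qed
  then show ?thesis by simp
qed

definition Aset :: "nat \<Rightarrow> nat set" where "Aset m = (\<lambda>j. 2 * j) ` {..<m} \<union> {s. 2 * m + 1 \<le> s}"
definition Bset :: "nat \<Rightarrow> nat set" where "Bset m = insert (2 * m + 1) ((\<lambda>j. 2 * j) ` {..m})"
definition Cands :: "nat set set" where "Cands = range Aset \<union> range Bset \<union> {{s. even s}}"

lemma plus2_iff: "(x::nat) \<in> (\<lambda>s. s + 2) ` TTT \<longleftrightarrow> 2 \<le> x \<and> x - 2 \<in> TTT"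
proof
  assume "x \<in> (\<lambda>s. s + 2) ` TTT" then show "2 \<le> x \<and> x - 2 \<in> TTT" by auto
next
  assume "2 \<le> x \<and> x - 2 \<in> TTT"
  then have "x = (x - 2) + 2" "x - 2 \<in> TTT" by auto
  then show "x \<in> (\<lambda>s. s + 2) ` TTT" by (metis image_eqI)
qed

lemma evens_lt: "(x::nat) \<in> (\<lambda>j. 2 * j) ` {..<m} \<longleftrightarrow> even x \<and> x < 2 * m"
  by (auto simp: image_iff elim!: evenE)

lemma evens_le: "(x::nat) \<in> (\<lambda>j. 2 * j) ` {..m} \<longleftrightarrow> even x \<and> x \<le> 2 * m"
  by (auto simp: image_iff elim!: evenE)

lemma Aset_iff: "(x::nat) \<in> Aset m \<longleftrightarrow> (even x \<and> x < 2 * m) \<or> 2 * m + 1 \<le> x"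
  unfolding Aset_def using evens_lt by blast

lemma Bset_iff: "(x::nat) \<in> Bset m \<longleftrightarrow> x = 2 * m + 1 \<or> (even x \<and> x \<le> 2 * m)"
  unfolding Bset_def using evens_le by blast

lemma A_step: "insert 0 ((\<lambda>s. s + 2) ` Aset m) = Aset (Suc m)"
proof (rule set_eqI)
  fix x :: nat
  show "x \<in> insert 0 ((\<lambda>s. s + 2) ` Aset m) \<longleftrightarrow> x \<in> Aset (Suc m)"
    unfolding insert_iff plus2_iff Aset_iff by (cases "x < 2") auto
qed

lemma B_step: "insert 0 ((\<lambda>s. s + 2) ` Bset m) = Bset (Suc m)"
proof (rule set_eqI)
  fix x :: nat
  show "x \<in> insert 0 ((\<lambda>s. s + 2) ` Bset m) \<longleftrightarrow> x \<in> Bset (Suc m)"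
    unfolding insert_iff plus2_iff Bset_iff by (cases "x < 2") auto
qed

lemma E_step: "insert 0 ((\<lambda>s. s + 2) ` {s. even s}) = {s::nat. even s}"
proof (rule set_eqI)
  fix x :: nat
  show "x \<in> insert 0 ((\<lambda>s. s + 2) ` {s. even s}) \<longleftrightarrow> x \<in> {s. even s}"
    unfolding insert_iff plus2_iff by (cases "x < 2") auto
qed

lemma Cands_step: "S' \<in> Cands \<Longrightarrow> insert 0 ((\<lambda>s. s + 2) ` S') \<in> Cands"
  unfolding Cands_def using A_step B_step E_step by auto

lemma S_decomp:
  fixes S :: "nat set"
  assumes "0 \<in> S" "1 \<notin> S"
  shows "S = insert 0 ((\<lambda>s. s + 2) ` {s. s + 2 \<in> S})"
proof (rule set_eqI)
  fix x :: nat
  show "x \<in> S \<longleftrightarrow> x \<in> insert 0 ((\<lambda>s. s + 2) ` {s. s + 2 \<in> S})"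
  proof (cases "x < 2")
    case True
    then show ?thesis unfolding insert_iff plus2_iff using assms by (auto simp: less_2_cases_iff)
  next
    case False
    then have "x - 2 + 2 = x" by simp
    then show ?thesis unfolding insert_iff plus2_iff using False by (auto simp: mem_Collect_eq)
  qed
qed

lemma classify_ind:
  "\<forall>S. UL S \<longrightarrow> (\<forall>j<m. 2 * j \<in> S \<and> 2 * j + 1 \<notin> S) \<or> S \<in> Cands"
proof (induction m)
  case 0 then show ?case by simp
next
  case (Suc m)
  show ?case
  proof (intro allI impI)
    fix S assume UL: "UL S"
    show "(\<forall>j<Suc m. 2 * j \<in> S \<and> 2 * j + 1 \<notin> S) \<or> S \<in> Cands"
    proof (cases "0 \<in> S \<and> 1 \<notin> S")
      case False
      then have "S = {s. 1 \<le> s} \<or> S = {0, 1}" using base_case[OF UL] by blast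
      moreover have "{s. 1 \<le> s} = Aset 0" by (auto simp: Aset_iff)
      moreover have "{0, 1} = Bset 0" by (auto simp: Bset_iff)
      ultimately have "S \<in> Cands" unfolding Cands_def by auto
      then show ?thesis by blast
    next
      case True
      let ?S' = "{s. s + 2 \<in> S}"
      have UL': "UL ?S'" using UL_step[OF UL] True by blast
      have dec: "S = insert 0 ((\<lambda>s. s + 2) ` ?S')" using S_decomp True by blast
      from Suc.IH UL' have "(\<forall>j<m. 2 * j \<in> ?S' \<and> 2 * j + 1 \<notin> ?S') \<or> ?S' \<in> Cands" by blast
      then show ?thesis
      proof
        assume H: "\<forall>j<m. 2 * j \<in> ?S' \<and> 2 * j + 1 \<notin> ?S'"
        have "\<forall>j<Suc m. 2 * j \<in> S \<and> 2 * j + 1 \<notin> S"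
        proof (intro allI impI)
          fix j assume j: "j < Suc m"
          show "2 * j \<in> S \<and> 2 * j + 1 \<notin> S"
          proof (cases j)
            case 0 then show ?thesis using True by simp
          next
            case (Suc i)
            then have "i < m" using j by simp
            then have "2 * i + 2 \<in> S \<and> 2 * i + 1 + 2 \<notin> S" using H by simp
            then show ?thesis using Suc by (simp add: algebra_simps)
          qed
        qed
        then show ?thesis by blast
      next
        assume "?S' \<in> Cands"
        then have "S \<in> Cands" using Cands_step dec by metis
        then show ?thesis by blast
      qed
    qed
  qed
qed

lemma classify: "UL S \<Longrightarrow> S \<in> Cands"
proof -
  assume UL: "UL S"
  show "S \<in> Cands"
  proof (cases "\<forall>m. \<forall>j<m. 2 * j \<in> S \<and> 2 * j + 1 \<notin> S")
    case True
    have "S = {s. even s}"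
    proof (rule set_eqI)
      fix x :: nat
      show "x \<in> S \<longleftrightarrow> x \<in> {s. even s}"
      proof (cases "even x")
        case True
        then obtain j where "x = 2 * j" by (auto elim: evenE)
        then show ?thesis using \<open>\<forall>m. \<forall>j<m. 2 * j \<in> S \<and> 2 * j + 1 \<notin> S\<close> True by auto
      next
        case False
        then obtain j where "x = 2 * j + 1" by (auto elim: oddE)
        then show ?thesis using \<open>\<forall>m. \<forall>j<m. 2 * j \<in> S \<and> 2 * j + 1 \<notin> S\<close> False by auto
      qed
    qed
    then show ?thesis unfolding Cands_def by simp
  next
    case False
    then obtain m where "\<not> (\<forall>j<m. 2 * j \<in> S \<and> 2 * j + 1 \<notin> S)" by blast
    then show ?thesis using classify_ind[of m] UL by blast
  qed
qed

lemma countable_Cands: "countable Cands"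
  unfolding Cands_def by simp


definition zrun :: "nat \<Rightarrow> bool list \<Rightarrow> bool" where
  "zrun M u \<longleftrightarrow> (\<forall>i k. i + k \<le> length u \<longrightarrow> (\<forall>m<k. \<not> u!(i+m)) \<longrightarrow> k \<le> M)"

lemma lang_props:
  assumes fin: "finite F" and u: "u \<in> language (gap_shift F)"
  shows "gapok F u \<and> zrun (Max F) u"
proof -
  obtain n where "u \<in> blocks (gap_shift F) n" using u unfolding language_def by blast
  then have "length u = n \<and> gapok F u \<and> (\<forall>i k. i + k \<le> n \<longrightarrow> (\<forall>m<k. \<not> u!(i+m)) \<longrightarrow> (\<exists>s\<in>F. k \<le> s))"
    by (rule blocks_gapok)
  then show ?thesis unfolding zrun_def using Max_ge[OF fin] by (meson order_trans)
qed

lemma pad: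
  assumes g: "gapok F u" and z: "zrun M u" and MF: "M \<in> F"
  shows "\<exists>p q. p \<le> M \<and> q \<le> M \<and> gapok F (True # replicate p False @ u @ replicate q False @ [True])"
proof (cases "True \<in> set u")
  case False
  let ?l = "length u"
  have u: "u = replicate ?l False" using no_true[OF False] .
  have "\<forall>m<?l. \<not> u!(0+m)" using False nth_mem by fastforce
  then have "?l \<le> M" using z[unfolded zrun_def, rule_format, of 0 ?l] by simp
  then have e: "True # replicate (M - ?l) False @ u @ replicate 0 False @ [True] = True # replicate M False @ [True]"
    by (subst u) (simp add: replicate_add[symmetric])
  show ?thesis
    by (rule exI[of _ "M - ?l"], rule exI[of _ 0]) (simp only: e gapok_basic[OF MF], simp)
next
  case True
  obtain a r where ar: "u = replicate a False @ True # r" using first_split[OF True] by blast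
  obtain y0 b where yb: "True # r = y0 @ True # replicate b False" using last_split[of "True # r"] by auto
  have u2: "u = replicate a False @ y0 @ True # replicate b False" using ar yb by simp
  have "\<forall>m<a. \<not> u!(0+m)" using u2 by (simp add: nth_append)
  then have aM: "a \<le> M" using z[unfolded zrun_def, rule_format, of 0 a] u2 by simp
  have "\<forall>m<b. \<not> u ! (length u - b + m)"
  proof (intro allI impI)
    fix m assume "m < b"
    then show "\<not> u ! (length u - b + m)" using u2 by (simp add: nth_append)
  qed
  then have bM: "b \<le> M" using z[unfolded zrun_def, rule_format, of "length u - b" b] u2 by simp
  have gr: "gapok F (True # r)" using gapok_suffix[of F "replicate a False" "True # r"] g ar by simp
  have gy: "gapok F (y0 @ [True])"
    using gapok_prefix[of F "y0 @ [True]" "replicate b False"] gr yb by simp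
  let ?Y = "y0 @ True # (replicate M False @ [True])"
  have gY: "gapok F ?Y" by (rule gapok_glue[OF gy]) (use gapok_basic[OF MF] in simp)
  have hd: "?Y = True # tl ?Y"
  proof (cases y0)
    case Nil then show ?thesis by simp
  next
    case (Cons c cs)
    then have "c = True" using yb by simp
    then show ?thesis using Cons by simp
  qed
  have gY': "gapok F (True # tl ?Y)" using gY hd by simp
  have W: "True # replicate (M - a) False @ u @ replicate (M - b) False @ [True] = (True # replicate M False) @ True # tl ?Y"
  proof -
    have e1: "replicate (M - a) False @ replicate a False = replicate M False"
      using aM by (simp add: replicate_add[symmetric])
    have e2: "replicate b False @ replicate (M - b) False = replicate M False"
      using bM by (simp add: replicate_add[symmetric])
    have "True # replicate (M - a) False @ u @ replicate (M - b) False @ [True]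
        = True # (replicate (M - a) False @ replicate a False) @ y0 @ True # (replicate b False @ replicate (M - b) False) @ [True]"
      using u2 by simp
    also have "\<dots> = (True # replicate M False) @ ?Y" unfolding e1 e2 by simp
    finally show ?thesis using hd by simp
  qed
  have "gapok F ((True # replicate M False) @ True # tl ?Y)"
    by (rule gapok_glue[OF _ gY']) (use gapok_basic[OF MF] in simp)
  then show ?thesis using aM bM W by (intro exI[of _ "M - a"] exI[of _ "M - b"]) simp
qed

lemma in_language: "y \<in> blocks X n \<Longrightarrow> y \<in> language X"
  unfolding language_def by blast

lemma gap_spec:
  assumes fin: "finite F" and F0: "0 \<in> F"
  shows "has_specification (gap_shift F)"
proof -
  let ?M = "Max F"
  have MF: "?M \<in> F" using Max_in[OF fin] F0 by blast
  let ?N = "2 * ?M + 1"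
  have "\<forall>u\<in>language (gap_shift F). \<forall>v\<in>language (gap_shift F).
      \<exists>w\<in>blocks (gap_shift F) ?N. u @ w @ v \<in> language (gap_shift F)"
  proof (intro ballI)
    fix u v assume u: "u \<in> language (gap_shift F)" and v: "v \<in> language (gap_shift F)"
    obtain pu qu where pu: "pu \<le> ?M" "qu \<le> ?M" and gu: "gapok F (True # replicate pu False @ u @ replicate qu False @ [True])"
      using pad[OF _ _ MF] lang_props[OF fin u] by blast
    obtain pv qv where pv: "pv \<le> ?M" "qv \<le> ?M" and gv: "gapok F (True # replicate pv False @ v @ replicate qv False @ [True])"
      using pad[OF _ _ MF] lang_props[OF fin v] by blast
    define k where "k = ?N - qu - pv"
    have k1: "1 \<le> k" using pu pv unfolding k_def by simp
    define w where "w = replicate qu False @ replicate k True @ replicate pv False"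
    have wl: "length w = ?N" using pu pv unfolding w_def k_def by simp
    define z where "z = True # replicate pu False @ u @ w @ v @ replicate qv False"
    let ?A = "True # replicate pu False @ u @ replicate qu False"
    let ?R = "replicate pv False @ v @ replicate qv False @ [True]"
    have gA: "gapok F (?A @ [True])" using gu by simp
    have gR: "gapok F (True # replicate (k - 1) True @ ?R)" using gapok_ones[OF F0, of ?R] gv by simp
    have kk: "replicate k True = True # replicate (k - 1) True" using k1 by (cases k) auto
    have zeq: "z @ [True] = ?A @ True # (replicate (k - 1) True @ ?R)"
      unfolding z_def w_def kk by simp
    have gz: "gapok F (z @ [True])" unfolding zeq by (rule gapok_glue[OF gA gR])
    have z0: "z \<noteq> []" "z ! 0" unfolding z_def by auto
    have b1: "u @ w @ v \<in> blocks (gap_shift F) (length (u @ w @ v))"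
      by (rule per_blocks[OF z0 gz, of "True # replicate pu False" _ "replicate qv False"]) (simp add: z_def)
    have b2: "w \<in> blocks (gap_shift F) (length w)"
      by (rule per_blocks[OF z0 gz, of "True # replicate pu False @ u" _ "v @ replicate qv False"]) (simp add: z_def)
    show "\<exists>w\<in>blocks (gap_shift F) ?N. u @ w @ v \<in> language (gap_shift F)"
      using b1 b2 wl in_language by metis
  qed
  then show ?thesis unfolding has_specification_def by (intro exI[of _ ?N]) simp
qed


lemma phi_gt_32: "3 / 2 < phi"
proof -
  have "2 < sqrt 5" by (rule real_less_rsqrt) simp
  then show ?thesis unfolding phi_def by simp
qed

lemma rho_exists:
  assumes e: "0 < e" and H: "\<forall>K. PS S K \<le> 1 - e"
  shows "\<exists>\<rho>. 1 \<le> \<rho> \<and> \<rho> < phi \<and> (\<forall>K. (\<Sum>s\<in>S\<inter>{..<K}. (1/\<rho>)^(s+1)) \<le> 1)"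
proof -
  define e' where "e' = min e (1/2)"
  have e'0: "0 < e'" "e' \<le> 1/2" "e' \<le> e" using e unfolding e'_def by auto
  obtain K0 where K0: "(2/3::real) ^ K0 < e' / 6" using real_arch_pow_inv[of "e'/6" "2/3"] e'0 by auto
  have K0pos: "0 < K0"
  proof (rule ccontr)
    assume "\<not> 0 < K0" then have "K0 = 0" by simp
    then show False using K0 e'0 by simp
  qed
  define y where "y = (1 - e'/2) / (1 - e')"
  have y1: "1 < y" unfolding y_def using e'0 by (simp add: field_simps)
  define t0 where "t0 = root K0 y"
  have t01: "1 < t0" unfolding t0_def using real_root_gt_1_iff[OF K0pos] y1 by simp
  have t0p: "t0 ^ K0 = y" unfolding t0_def using real_root_pow_pos[OF K0pos] y1 by simp
  define t where "t = min (2 * phi / 3) t0"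
  have t1: "1 < t" unfolding t_def using t01 phi_gt_32 by simp
  have tK: "t ^ K0 \<le> y"
  proof -
    have "t ^ K0 \<le> t0 ^ K0" using t1 unfolding t_def by (intro power_mono) auto
    then show ?thesis using t0p by simp
  qed
  define c where "c = t / phi"
  have phip: "0 < phi" using phi_gt1 by simp
  have c0: "0 < c" unfolding c_def using t1 phip by simp
  have c23: "c \<le> 2/3" unfolding c_def t_def using phip by (simp add: field_simps)
  define \<rho> where "\<rho> = phi / t"
  have rc: "1 / \<rho> = c" unfolding \<rho>_def c_def by simp
  have rlt: "\<rho> < phi" unfolding \<rho>_def using t1 phip by (simp add: field_simps)
  have rge: "1 \<le> \<rho>"
  proof -
    have "t \<le> 2 * phi / 3" unfolding t_def by simp
    then have "phi / (2 * phi / 3) \<le> phi / t" using t1 phip by (intro divide_left_mono) auto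
    moreover have "phi / (2 * phi / 3) = 3/2" using phip by (simp add: field_simps)
    ultimately show ?thesis unfolding \<rho>_def by simp
  qed
  have "\<forall>K. (\<Sum>s\<in>S\<inter>{..<K}. (1/\<rho>)^(s+1)) \<le> 1"
  proof
    fix K
    let ?A = "S \<inter> {..<K}"
    have split: "(\<Sum>s\<in>?A. c^(s+1)) = (\<Sum>s\<in>?A \<inter> {..<K0}. c^(s+1)) + (\<Sum>s\<in>?A - {..<K0}. c^(s+1))"
      by (rule sum.Int_Diff) simp
    have p1: "(\<Sum>s\<in>?A \<inter> {..<K0}. c^(s+1)) \<le> 1 - e'/2"
    proof -
      have "(\<Sum>s\<in>?A \<inter> {..<K0}. c^(s+1)) \<le> (\<Sum>s\<in>?A \<inter> {..<K0}. t^K0 * qq^(s+1))"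
      proof (rule sum_mono)
        fix s assume "s \<in> ?A \<inter> {..<K0}"
        then have sK: "s + 1 \<le> K0" by simp
        have "c^(s+1) = t^(s+1) * qq^(s+1)" unfolding c_def qq_def by (simp add: power_mult_distrib[symmetric])
        also have "\<dots> \<le> t^K0 * qq^(s+1)"
          using sK t1 qq_pos by (intro mult_right_mono power_increasing) auto
        finally show "c^(s+1) \<le> t^K0 * qq^(s+1)" .
      qed
      also have "\<dots> = t^K0 * PS S (min K K0)"
      proof -
        have "?A \<inter> {..<K0} = S \<inter> {..<min K K0}" by auto
        then show ?thesis unfolding PS_def by (simp add: sum_distrib_left)
      qed
      also have "\<dots> \<le> y * (1 - e')"
      proof (rule mult_mono)
        show "t^K0 \<le> y" by (rule tK)
        show "PS S (min K K0) \<le> 1 - e'" using H e'0 by (meson order_trans diff_left_mono)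
        show "0 \<le> y" using y1 by simp
        show "0 \<le> PS S (min K K0)" by (rule PS_nonneg)
      qed
      also have "\<dots> = 1 - e'/2" unfolding y_def using e'0 by (simp add: field_simps)
      finally show ?thesis .
    qed
    have p2: "(\<Sum>s\<in>?A - {..<K0}. c^(s+1)) \<le> e'/2"
    proof -
      have sub: "?A - {..<K0} \<subseteq> {K0..<K}" by auto
      have "(\<Sum>s\<in>?A - {..<K0}. c^(s+1)) \<le> (\<Sum>s\<in>{K0..<K}. c^(s+1))"
        by (rule sum_mono2[OF _ sub]) (use c0 in auto)
      also have "\<dots> \<le> 3 * c^(K0+1)"
      proof (cases "K0 \<le> K")
        case True
        have "(1 - c) * (\<Sum>s\<in>{K0..<K}. c^(s+1)) = c^(K0+1) - c^(K+1)"
          using geo[of c K0 K] c0 True by simp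
        moreover have "0 \<le> c^(K+1)" using c0 by simp
        ultimately have "(1 - c) * (\<Sum>s\<in>{K0..<K}. c^(s+1)) \<le> c^(K0+1)" by simp
        moreover have "1/3 \<le> 1 - c" using c23 by simp
        moreover have "0 \<le> (\<Sum>s\<in>{K0..<K}. c^(s+1))" using c0 by (simp add: sum_nonneg)
        ultimately have "1/3 * (\<Sum>s\<in>{K0..<K}. c^(s+1)) \<le> c^(K0+1)"
          by (meson mult_right_mono order_trans)
        then show ?thesis by simp
      next
        case False
        then show ?thesis using c0 by simp
      qed
      also have "\<dots> \<le> 3 * (2/3)^(K0+1)"
        using c0 c23 by (intro mult_left_mono power_mono) auto
      also have "\<dots> = 2 * (2/3)^K0" by simp
      also have "\<dots> \<le> e'/2"
      proof -
        have "0 \<le> (2/3::real)^K0" by simp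
        then show ?thesis using K0 by linarith
      qed
      finally show ?thesis .
    qed
    show "(\<Sum>s\<in>?A. (1/\<rho>)^(s+1)) \<le> 1" unfolding rc split using p1 p2 by simp
  qed
  then show ?thesis using rge rlt by blast
qed

lemma ent_UL:
  assumes ne: "S \<noteq> {}" and h: "has_entropy (gap_shift S) (log 2 phi)"
  shows "UL S"
proof -
  have phip: "0 < phi" using phi_gt1 by simp
  have U: "PS S K \<le> 1" for K
  proof (rule ccontr)
    assume "\<not> PS S K \<le> 1"
    then have sg: "1 < PS S K" by simp
    define F where "F = S \<inter> {..<K}"
    have fin: "finite F" unfolding F_def by simp
    have Fne: "F \<noteq> {}" using sg unfolding PS_def F_def by auto
    have FS: "F \<subseteq> S" unfolding F_def by simp
    let ?M = "Max F"
    define \<sigma> where "\<sigma> = PS S K"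
    have sig: "\<sigma> = (\<Sum>s\<in>F. qq^(s+1))" unfolding \<sigma>_def PS_def F_def ..
    define t where "t = root (?M + 1) \<sigma>"
    have t1: "1 < t" unfolding t_def using real_root_gt_1_iff[of "?M+1" \<sigma>] sg \<sigma>_def by simp
    have tp: "t ^ (?M + 1) = \<sigma>" unfolding t_def using real_root_pow_pos[of "?M+1" \<sigma>] sg \<sigma>_def by simp
    define r where "r = phi * t"
    have r1: "1 \<le> r" unfolding r_def using phi_gt1 t1 mult_mono[of 1 phi 1 t] by simp
    have rgt: "phi < r" unfolding r_def using phi_gt1 t1 by simp
    have Hs: "1 \<le> (\<Sum>s\<in>F. (1/r)^(s+1))"
    proof -
      have "(\<Sum>s\<in>F. qq^(s+1) * (1/t)^(?M+1)) \<le> (\<Sum>s\<in>F. (1/r)^(s+1))"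
      proof (rule sum_mono)
        fix s assume s: "s \<in> F"
        have sM: "s + 1 \<le> ?M + 1" using Max_ge[OF fin s] by simp
        have "(1/t)^(?M+1) \<le> (1/t)^(s+1)"
          using t1 sM by (intro power_decreasing) auto
        then have "qq^(s+1) * (1/t)^(?M+1) \<le> qq^(s+1) * (1/t)^(s+1)"
          using qq_pos by (intro mult_left_mono) auto
        also have "\<dots> = (1/r)^(s+1)" unfolding r_def qq_def by (simp add: power_mult_distrib[symmetric])
        finally show "qq^(s+1) * (1/t)^(?M+1) \<le> (1/r)^(s+1)" .
      qed
      moreover have "(\<Sum>s\<in>F. qq^(s+1) * (1/t)^(?M+1)) = \<sigma> * (1/t)^(?M+1)"
        unfolding sig by (rule sum_distrib_right[symmetric])
      moreover have "\<sigma> * (1/t)^(?M+1) = 1" using tp t1 sg \<sigma>_def by (simp add: power_one_over)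
      ultimately show ?thesis by simp
    qed
    have bl: "\<forall>n\<ge>1. (1 / r^(?M+1)) * r ^ n \<le> real (card (blocks (gap_shift S) n))"
    proof (intro allI impI)
      fix n :: nat assume "1 \<le> n"
      then obtain k where n: "n = Suc k" by (cases n) auto
      have "r ^ k / r ^ ?M \<le> real (card (blocks (gap_shift S) (Suc k)))"
        by (rule blocks_lower[OF fin Fne r1 Hs FS])
      moreover have "(1 / r^(?M+1)) * r ^ n = r ^ k / r ^ ?M" unfolding n using r1 by simp
      ultimately show "(1 / r^(?M+1)) * r ^ n \<le> real (card (blocks (gap_shift S) n))" using n by simp
    qed
    have "log 2 r \<le> log 2 phi" by (rule ent_lower[OF h _ r1 bl]) (use r1 in simp)
    moreover have "log 2 phi < log 2 r" using rgt phip by simp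
    ultimately show False by simp
  qed
  have L: "\<exists>K. 1 - e < PS S K" if e: "0 < e" for e
  proof (rule ccontr)
    assume "\<not> ?thesis"
    then have "\<forall>K. PS S K \<le> 1 - e" by (simp add: not_less)
    then obtain \<rho> where r: "1 \<le> \<rho>" "\<rho> < phi" and Hr: "\<forall>K. (\<Sum>s\<in>S\<inter>{..<K}. (1/\<rho>)^(s+1)) \<le> 1"
      using rho_exists[OF e] by blast
    have "log 2 phi \<le> log 2 \<rho>"
      by (rule ent_upper[OF h r(1)]) (use blocks_upper[OF r(1) Hr] in blast)
    moreover have "log 2 \<rho> < log 2 phi" using r by simp
    ultimately show False by simp
  qed
  show ?thesis unfolding UL_def using U L by blast
qed

lemma sumB: "(\<Sum>s\<in>Bset m. qq^(s+1)) = 1"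
proof -
  have aux: "(\<Sum>j\<le>m. qq^(2*j+1)) + qq^(2*m+2) = 1"
  proof (induction m)
    case 0 then show ?case using qq_sum by (simp add: power2_eq_square)
  next
    case (Suc m)
    have "qq^(2 * Suc m + 1) + qq^(2 * Suc m + 2) = qq^(2*m+2) * (qq + qq^2)"
      by (simp add: power_add[symmetric] algebra_simps power2_eq_square)
    then have "qq^(2 * Suc m + 1) + qq^(2 * Suc m + 2) = qq^(2*m+2)" using qq_sum by simp
    then show ?case using Suc.IH by simp
  qed
  have "(\<Sum>s\<in>Bset m. qq^(s+1)) = qq^(2*m+2) + (\<Sum>s\<in>(\<lambda>j. 2*j) ` {..m}. qq^(s+1))"
    unfolding Bset_def by (subst sum.insert) auto
  also have "(\<Sum>s\<in>(\<lambda>j. 2*j) ` {..m}. qq^(s+1)) = (\<Sum>j\<le>m. qq^(2*j+1))"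
    by (subst sum.reindex) (auto simp: inj_on_def)
  finally show ?thesis using aux by simp
qed

lemma finB: "finite (Bset m)" unfolding Bset_def by simp
lemma B0: "0 \<in> Bset m" unfolding Bset_iff by simp

lemma entB: "has_entropy (gap_shift (Bset m)) (log 2 phi)"
proof -
  let ?F = "Bset m"
  let ?M = "Max ?F"
  have p1: "1 \<le> phi" using phi_gt1 by simp
  have iq: "1 / phi = qq" unfolding qq_def ..
  have Hs: "1 \<le> (\<Sum>s\<in>?F. (1/phi)^(s+1))" unfolding iq sumB by simp
  have Fne: "?F \<noteq> {}" using B0 by blast
  have b1: "\<forall>n\<ge>1. (1 / phi^(?M+1)) * phi ^ n \<le> real (card (blocks (gap_shift ?F) n))"
  proof (intro allI impI)
    fix n :: nat assume "1 \<le> n"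
    then obtain k where n: "n = Suc k" by (cases n) auto
    have "phi ^ k / phi ^ ?M \<le> real (card (blocks (gap_shift ?F) (Suc k)))"
      by (rule blocks_lower[OF finB Fne p1 Hs]) simp
    moreover have "(1 / phi^(?M+1)) * phi ^ n = phi ^ k / phi ^ ?M" unfolding n using p1 by simp
    ultimately show "(1 / phi^(?M+1)) * phi ^ n \<le> real (card (blocks (gap_shift ?F) n))" using n by simp
  qed
  have H2: "\<forall>K. (\<Sum>s\<in>?F\<inter>{..<K}. (1/phi)^(s+1)) \<le> 1"
  proof
    fix K
    have "(\<Sum>s\<in>?F\<inter>{..<K}. qq^(s+1)) \<le> (\<Sum>s\<in>?F. qq^(s+1))"
      by (rule sum_mono2[OF finB]) (auto simp: qq_pos less_imp_le)
    then show "(\<Sum>s\<in>?F\<inter>{..<K}. (1/phi)^(s+1)) \<le> 1" unfolding iq sumB .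
  qed
  show ?thesis
    by (rule ent_exact[OF _ p1 b1 blocks_upper[OF p1 H2, THEN allI]]) (use p1 in simp)
qed

lemma B_distinct:
  assumes "m < m'"
  shows "gap_shift (Bset m) \<noteq> gap_shift (Bset m')"
proof
  assume eq: "gap_shift (Bset m) = gap_shift (Bset m')"
  let ?s = "2 * m' + 1"
  let ?z = "True # replicate ?s False"
  have sB: "?s \<in> Bset m'" unfolding Bset_iff by simp
  have "per ?z \<in> gap_shift (Bset m')"
    by (rule per_in) (use gapok_basic[OF sB] in auto)
  then have x: "per ?z \<in> gap_shift (Bset m)" using eq by simp
  have L: "length ?z = ?s + 1" by simp
  have x0: "per ?z 0" using per_nat[of 0 ?z] by simp
  have x1: "per ?z (int (?s + 1))" unfolding per_def by simp
  have btw: "\<forall>k. 0 < k \<and> k < int (?s + 1) \<longrightarrow> \<not> per ?z k"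
  proof (intro allI impI)
    fix k :: int assume k: "0 < k \<and> k < int (?s + 1)"
    then have nk: "nat k < length ?z" by (simp add: nat_less_iff)
    then have "per ?z (int (nat k)) = ?z ! nat k" using per_nat[OF nk] by simp
    moreover have "\<not> ?z ! nat k"
    proof -
      have j: "1 \<le> nat k" "nat k < ?s + 1" using k nk by auto
      then obtain i where i: "nat k = Suc i" by (cases "nat k") auto
      then have "i < ?s" using j by simp
      then show ?thesis unfolding i by (simp add: nth_replicate del: replicate.simps)
    qed
    ultimately show "\<not> per ?z k" using k by simp
  qed
  have g1: "\<forall>i j. i < j \<and> per ?z i \<and> per ?z j \<and> (\<forall>k. i < k \<and> k < j \<longrightarrow> \<not> per ?z k) \<longrightarrow> nat (j - i - 1) \<in> Bset m"
    using x unfolding gap_shift_def by blast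
  have "nat (int (?s + 1) - 0 - 1) \<in> Bset m"
    using g1[rule_format, of 0 "int (?s + 1)"] x0 x1 btw by (simp del: of_nat_add add: of_nat_add[symmetric])
  moreover have "nat (int (?s + 1) - 0 - 1) = ?s" by simp
  ultimately have "?s \<in> Bset m" by simp
  then show False using assms unfolding Bset_iff by auto
qed

lemma inj_B: "inj (\<lambda>m. gap_shift (Bset m))"
proof (rule injI)
  fix m m' assume "gap_shift (Bset m) = gap_shift (Bset m')"
  then show "m = m'" using B_distinct by (metis linorder_neq_iff)
qed

theorem proposition4p4:
  defines "E \<equiv> {gap_shift S | S. S \<noteq> {} \<and>
                  has_entropy (gap_shift S) (log 2 ((1 + sqrt 5) / 2))}"
  shows "countable E \<and> infinite E \<and> infinite {X \<in> E. has_specification X}"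
proof -
  have phiE: "(1 + sqrt 5) / 2 = phi" unfolding phi_def ..
  have sub1: "E \<subseteq> gap_shift ` Cands"
  proof
    fix X assume "X \<in> E"
    then obtain S where S: "X = gap_shift S" "S \<noteq> {}" "has_entropy (gap_shift S) (log 2 phi)"
      unfolding E_def phiE by blast
    then have "S \<in> Cands" using classify ent_UL by blast
    then show "X \<in> gap_shift ` Cands" using S by blast
  qed
  have c: "countable E" using countable_subset[OF sub1] countable_Cands by blast
  have sub2: "range (\<lambda>m. gap_shift (Bset m)) \<subseteq> {X \<in> E. has_specification X}"
  proof
    fix X assume "X \<in> range (\<lambda>m. gap_shift (Bset m))"
    then obtain m where X: "X = gap_shift (Bset m)" by blast
    have "X \<in> E" unfolding E_def phiE using X entB B0 by blast
    moreover have "has_specification X" using X gap_spec[OF finB B0] by simp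
    ultimately show "X \<in> {X \<in> E. has_specification X}" by blast
  qed
  have i2: "infinite {X \<in> E. has_specification X}"
    using infinite_super[OF sub2 range_inj_infinite[OF inj_B]] .
  have "infinite E" using i2 infinite_super[of "{X \<in> E. has_specification X}" E] by blast
  then show ?thesis using c i2 by blast
qed


end
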